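(* Let $\eta_1,\dots,\eta_r\in\mathbb{R}$ be pairwise distinct, let $q_1,\dots,q_r$ be real nonzero polynomials with $\deg q_j=\sigma_j-1$, and let $\gamma=\sigma_1+\dots+\sigma_r$. Let $h:\mathbb{R}\to\mathbb{R}$ be a function with $h\in C^{\gamma-2}(\mathbb{R})$, $h^{(\gamma-2)}$ absolutely continuous, $h(x+1)=-h(x)$ for all $x\in\mathbb{R}$, and $$h(x)=\sum_{j=1}^r q_j(x)e^{\eta_j x},\qquad x\in[0,1).$$ Then there exists $x_0\in\mathbb{R}$ such that $h$ is monotone on each interval $[x_0+k,x_0+k+1)$, $k\in\mathbb{Z}$. *)

theory Defs
  imports "HOL-Analysis.Analysis" "HOL-Computational_Algebra.Polynomial"
begin

definition abs_continuous_on :: "real set \<Rightarrow> (real \<Rightarrow> real) \<Rightarrow> bool" where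
  "abs_continuous_on S f \<longleftrightarrow>
     (\<forall>\<epsilon>>0. \<exists>\<delta>>0. \<forall>(n::nat) (a::nat \<Rightarrow> real) (b::nat \<Rightarrow> real).
        (\<forall>i<n. a i \<le> b i \<and> {a i..b i} \<subseteq> S) \<and>
        (\<forall>i<n. \<forall>j<n. i \<noteq> j \<longrightarrow> b i \<le> a j \<or> b j \<le> a i) \<and>
        (\<Sum>i<n. b i - a i) < \<delta>
        \<longrightarrow> (\<Sum>i<n. \<bar>f (b i) - f (a i)\<bar>) < \<epsilon>)"

definition abs_continuous_real :: "(real \<Rightarrow> real) \<Rightarrow> bool" where
  "abs_continuous_real f \<longleftrightarrow> (\<forall>a b. abs_continuous_on {a..b} f)"

definition C_k :: "nat \<Rightarrow> (real \<Rightarrow> real) \<Rightarrow> bool" where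
  "C_k m f \<longleftrightarrow> (\<forall>k<m. \<forall>x. (deriv ^^ k) f differentiable (at x)) \<and>
                 continuous_on UNIV ((deriv ^^ m) f)"

end

theory Submission
  imports Defs
begin


definition E :: "(nat \<Rightarrow> real poly) \<Rightarrow> (nat \<Rightarrow> real) \<Rightarrow> nat set \<Rightarrow> real \<Rightarrow> real" where
  "E p \<mu> J x = (\<Sum>j\<in>J. poly (p j) x * exp (\<mu> j * x))"

definition isE :: "(real \<Rightarrow> real) \<Rightarrow> bool" where
  "isE g \<longleftrightarrow> (\<exists>p \<mu> J. finite J \<and> g = E p \<mu> J)"

definition op :: "real \<Rightarrow> (real \<Rightarrow> real) \<Rightarrow> real \<Rightarrow> real" where
  "op l g = (\<lambda>x. deriv g x - l * g x)"

fun opL :: "real list \<Rightarrow> (real \<Rightarrow> real) \<Rightarrow> real \<Rightarrow> real" where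
  "opL [] g = g"
| "opL (l # ls) g = opL ls (op l g)"

lemma opL_append: "opL (as @ bs) g = opL bs (opL as g)"
  by (induction as arbitrary: g) auto

lemma E_DERIV:
  assumes "finite J"
  shows "(E p \<mu> J has_real_derivative E (\<lambda>j. pderiv (p j) + smult (\<mu> j) (p j)) \<mu> J x) (at x)"
proof -
  have "((\<lambda>x. \<Sum>j\<in>J. poly (p j) x * exp (\<mu> j * x)) has_real_derivative
      (\<Sum>j\<in>J. poly (pderiv (p j)) x * exp (\<mu> j * x) + poly (p j) x * (exp (\<mu> j * x) * \<mu> j))) (at x)"
    by (rule DERIV_sum) (auto intro!: derivative_eq_intros poly_DERIV)
  moreover have "(\<Sum>j\<in>J. poly (pderiv (p j)) x * exp (\<mu> j * x) + poly (p j) x * (exp (\<mu> j * x) * \<mu> j))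
     = E (\<lambda>j. pderiv (p j) + smult (\<mu> j) (p j)) \<mu> J x"
    unfolding E_def by (intro sum.cong) (auto simp: algebra_simps)
  ultimately show ?thesis unfolding E_def[abs_def] by simp
qed

lemma E_deriv: "finite J \<Longrightarrow> deriv (E p \<mu> J) = E (\<lambda>j. pderiv (p j) + smult (\<mu> j) (p j)) \<mu> J"
  using E_DERIV DERIV_imp_deriv by blast

lemma isE_DERIV: "isE g \<Longrightarrow> (g has_real_derivative deriv g x) (at x)"
  unfolding isE_def using E_DERIV E_deriv by metis

lemma isE_deriv: "isE g \<Longrightarrow> isE (deriv g)"
  unfolding isE_def using E_deriv by metis

lemma isE_funpow: "isE g \<Longrightarrow> isE ((deriv ^^ m) g)"
  by (induction m) (auto intro: isE_deriv)

lemma isE_differentiable: "isE g \<Longrightarrow> g differentiable (at x)"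
  using isE_DERIV real_differentiable_def by blast

lemma isE_cont: "isE g \<Longrightarrow> continuous_on S g"
  by (meson DERIV_isCont continuous_at_imp_continuous_on isE_DERIV)

lemma isE_isCont: "isE g \<Longrightarrow> isCont g x"
  by (meson DERIV_isCont isE_DERIV)

lemma isE_neg: "isE g \<Longrightarrow> isE (\<lambda>x. - g x)"
proof -
  assume "isE g"
  then obtain p \<mu> J where "finite J" "g = E p \<mu> J" unfolding isE_def by blast
  then have "(\<lambda>x. - g x) = E (\<lambda>j. - p j) \<mu> J" by (auto simp: E_def sum_negf[symmetric])
  then show ?thesis using \<open>finite J\<close> unfolding isE_def by blast
qed

lemma op_E: "finite J \<Longrightarrow> op l (E p \<mu> J) = E (\<lambda>j. pderiv (p j) + smult (\<mu> j - l) (p j)) \<mu> J"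
  unfolding op_def E_deriv
  by (auto simp: E_def sum_distrib_left sum_subtractf[symmetric] algebra_simps intro!: ext sum.cong)

lemma isE_op: "isE g \<Longrightarrow> isE (op l g)"
  unfolding isE_def using op_E by metis

lemma isE_opL: "isE g \<Longrightarrow> isE (opL ls g)"
  by (induction ls arbitrary: g) (auto intro: isE_op)

lemma deriv_op: "isE g \<Longrightarrow> deriv (op l g) = op l (deriv g)"
proof
  fix x assume g: "isE g"
  have "((\<lambda>x. deriv g x - l * g x) has_real_derivative deriv (deriv g) x - l * deriv g x) (at x)"
    using DERIV_diff[OF isE_DERIV[OF isE_deriv[OF g]] DERIV_cmult[OF isE_DERIV[OF g]]] by simp
  then show "deriv (op l g) x = op l (deriv g) x"
    unfolding op_def by (rule DERIV_imp_deriv)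
qed

lemma funpow_op: "isE g \<Longrightarrow> (deriv ^^ m) (op l g) = op l ((deriv ^^ m) g)"
  by (induction m) (auto simp: deriv_op isE_funpow)

lemma deriv_opL: "isE g \<Longrightarrow> deriv (opL ls g) = opL ls (deriv g)"
  by (induction ls arbitrary: g) (auto simp: deriv_op isE_op)

lemma opL_neg: "isE g \<Longrightarrow> opL ls (\<lambda>x. - g x) = (\<lambda>x. - opL ls g x)"
proof (induction ls arbitrary: g)
  case (Cons l ls)
  have "op l (\<lambda>x. - g x) = (\<lambda>x. - op l g x)"
  proof
    fix x
    have "((\<lambda>x. - g x) has_real_derivative - deriv g x) (at x)"
      using DERIV_minus[OF isE_DERIV[OF Cons.prems]] by simp
    then show "op l (\<lambda>x. - g x) x = - op l g x" unfolding op_def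
      using DERIV_imp_deriv by fastforce
  qed
  then show ?case using Cons isE_op by simp
qed simp


lemma W_DERIV:
  assumes "isE g"
  shows "((\<lambda>x. exp (- l * x) * g x) has_real_derivative exp (- l * x) * op l g x) (at x)"
proof -
  have "((\<lambda>x. exp (- l * x) * g x) has_real_derivative
          exp (- l * x) * (- l) * g x + exp (- l * x) * deriv g x) (at x)"
    using DERIV_mult[OF DERIV_fun_exp[OF DERIV_cmult_Id[of "-l" x]] isE_DERIV[OF assms]]
    by (simp add: algebra_simps)
  then show ?thesis unfolding op_def by (simp add: algebra_simps)
qed

lemma rolle_op:
  assumes "isE g" "a < b" "g a = 0" "g b = 0"
  shows "\<exists>w. a < w \<and> w < b \<and> op l g w = 0"
proof -
  let ?W = "\<lambda>x. exp (- l * x) * g x"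
  have d: "\<And>x. (?W has_real_derivative exp (- l * x) * op l g x) (at x)"
    using W_DERIV[OF assms(1)] .
  have "\<exists>z>a. z < b \<and> (?W has_real_derivative 0) (at z)"
    apply (rule Rolle[OF assms(2)])
    using assms apply simp
    using d apply (meson DERIV_isCont continuous_at_imp_continuous_on)
    using d real_differentiable_def by blast
  then obtain z where z: "a < z" "z < b" "(?W has_real_derivative 0) (at z)" by blast
  then have "exp (- l * z) * op l g z = 0" using DERIV_unique d by blast
  then show ?thesis using z by auto
qed

lemma op_zero_const:
  assumes "isE g" "op l g = (\<lambda>_. 0)"
  shows "g x = g 0 * exp (l * x)"
proof -
  let ?W = "\<lambda>x. exp (- l * x) * g x"
  have "\<And>x. (?W has_real_derivative 0) (at x)"
    using W_DERIV[OF assms(1), of l] assms(2) by (metis mult_zero_right)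
  then obtain c where c: "\<forall>x\<in>UNIV. ?W x = c"
    using has_field_derivative_zero_constant[of UNIV ?W] by (metis convex_UNIV at_within_open open_UNIV UNIV_I)
  then have "?W x = ?W 0" by (metis UNIV_I)
  then have "exp (- l * x) * g x = g 0" by simp
  then have "exp (l * x) * (exp (- l * x) * g x) = g 0 * exp (l * x)" by simp
  then show ?thesis by (simp add: mult.assoc[symmetric] exp_add[symmetric])
qed

lemma zero_bound:
  assumes "isE g" "opL ls g = (\<lambda>_. 0)" "length ls \<le> n"
    "\<forall>i. Suc i < n \<longrightarrow> z i < z (Suc i)" "\<forall>i<n. g (z i) = 0"
  shows "g = (\<lambda>_. 0)"
  using assms
proof (induction ls arbitrary: g n z)
  case Nil
  then show ?case by simp
next
  case (Cons l ls)
  then obtain n' where n: "n = Suc n'" by (cases n) auto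
  have "\<forall>i. \<exists>w. i < n' \<longrightarrow> z i < w \<and> w < z (Suc i) \<and> op l g w = 0"
  proof (intro allI)
    fix i
    show "\<exists>w. i < n' \<longrightarrow> z i < w \<and> w < z (Suc i) \<and> op l g w = 0"
    proof (cases "i < n'")
      case True
      have "z i < z (Suc i)" using Cons.prems(4) True n by simp
      moreover have "g (z i) = 0" "g (z (Suc i)) = 0" using Cons.prems(5) True n by simp_all
      ultimately show ?thesis using rolle_op[OF Cons.prems(1), of "z i" "z (Suc i)" l] by blast
    qed auto
  qed
  from choice[OF this] obtain w where w: "\<forall>i. i < n' \<longrightarrow> z i < w i \<and> w i < z (Suc i) \<and> op l g (w i) = 0"
    by blast
  have "op l g = (\<lambda>_. 0)"
  proof (rule Cons.IH[of _ n' w])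
    show "isE (op l g)" using Cons.prems isE_op by blast
    show "opL ls (op l g) = (\<lambda>_. 0)" using Cons.prems by simp
    show "length ls \<le> n'" using Cons.prems n by simp
    show "\<forall>i. Suc i < n' \<longrightarrow> w i < w (Suc i)"
    proof (intro allI impI)
      fix i assume "Suc i < n'"
      then have "w i < z (Suc i)" "z (Suc i) < w (Suc i)" using w by auto
      then show "w i < w (Suc i)" by linarith
    qed
    show "\<forall>i<n'. op l g (w i) = 0" using w by blast
  qed
  then have c: "\<And>x. g x = g 0 * exp (l * x)" using op_zero_const Cons.prems by blast
  have "g (z 0) = 0" using Cons.prems n by auto
  then have "g 0 = 0" using c[of "z 0"] by simp
  then show ?case using c by (metis mult_zero_left)
qed

definition BC :: "nat \<Rightarrow> (real \<Rightarrow> real) \<Rightarrow> bool" where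
  "BC p g \<longleftrightarrow> (\<forall>m<p. (deriv ^^ m) g 1 = - (deriv ^^ m) g 0)"

lemma BC_op:
  assumes "isE g" "BC (Suc p) g"
  shows "BC p (op l g)"
  unfolding BC_def
proof (intro allI impI)
  fix m assume m: "m < p"
  have e: "(deriv ^^ m) (op l g) = op l ((deriv ^^ m) g)" using funpow_op assms by blast
  have "(deriv ^^ Suc m) g 1 = - (deriv ^^ Suc m) g 0" "(deriv ^^ m) g 1 = - (deriv ^^ m) g 0"
    using assms m unfolding BC_def by auto
  then show "(deriv ^^ m) (op l g) 1 = - (deriv ^^ m) (op l g) 0"
    unfolding e by (simp add: op_def)
qed

lemma BC_zero:
  assumes "isE g" "opL ls g = (\<lambda>_. 0)" "BC (length ls) g"
  shows "g = (\<lambda>_. 0)"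
  using assms
proof (induction ls arbitrary: g)
  case Nil
  then show ?case by simp
next
  case (Cons l ls)
  have "op l g = (\<lambda>_. 0)"
  proof (rule Cons.IH)
    show "isE (op l g)" using Cons.prems(1) by (rule isE_op)
    show "opL ls (op l g) = (\<lambda>_. 0)" using Cons.prems(2) by simp
    show "BC (length ls) (op l g)" using Cons.prems(3) BC_op[OF Cons.prems(1)] by simp
  qed
  then have c: "\<And>x. g x = g 0 * exp (l * x)" using op_zero_const Cons.prems by blast
  have "(deriv ^^ 0) g 1 = - (deriv ^^ 0) g 0" using Cons.prems(3) unfolding BC_def
    by (drule_tac spec[of _ 0]) simp
  then have "g 1 = - g 0" by simp
  then have "g 0 * (exp l + 1) = 0" using c[of 1] by (simp add: algebra_simps)
  moreover have "exp l + 1 \<noteq> 0" using exp_gt_zero[of l] by linarith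
  ultimately have "g 0 = 0" by simp
  then show ?case using c by (metis mult_zero_left)
qed



lemma ivt0:
  fixes u :: "real \<Rightarrow> real"
  assumes "\<forall>x. isCont u x" "a \<le> b" "u a * u b \<le> 0"
  shows "\<exists>x. a \<le> x \<and> x \<le> b \<and> u x = 0"
proof -
  have "(u a \<le> 0 \<and> 0 \<le> u b) \<or> (u b \<le> 0 \<and> 0 \<le> u a)"
    using assms(3) mult_le_0_iff[of "u a" "u b"] by blast
  then show ?thesis
  proof
    assume "u a \<le> 0 \<and> 0 \<le> u b"
    then show ?thesis using IVT[of u a 0 b] assms by auto
  next
    assume "u b \<le> 0 \<and> 0 \<le> u a"
    then show ?thesis using IVT2[of u b 0 a] assms by auto
  qed
qed

definition tz :: "(real \<Rightarrow> real) \<Rightarrow> bool" where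
  "tz g \<longleftrightarrow> (\<exists>z0 z1 z2. 0 \<le> z0 \<and> z0 < z1 \<and> z1 < z2 \<and> z2 < 1 \<and> g z0 = 0 \<and> g z1 = 0 \<and> g z2 = 0)"

lemma third:
  assumes g: "isE g" "g 1 = - g 0" "deriv g 1 = - deriv g 0" "0 \<le> z0" "z0 < z2" "z2 < 1"
    "g z0 = 0" "g z2 = 0"
  shows "\<exists>w. ((z2 < w \<and> w < 1) \<or> (0 \<le> w \<and> w < z0)) \<and> op l g w = 0"
proof -
  let ?u = "op l g"
  have uc: "\<forall>x. isCont ?u x" using isE_isCont isE_op g(1) by blast
  have u10: "?u 1 = - ?u 0" using g(2,3) by (simp add: op_def)
  show ?thesis
  proof (cases "g 1 = 0")
    case True
    then show ?thesis using rolle_op[OF g(1) g(6) g(8) True, of l] by auto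
  next
    case False
    then have g0: "g 0 \<noteq> 0" using g(2) by simp
    then have "z0 \<noteq> 0" using g(7) by auto
    then have z0p: "0 < z0" using g(4) by simp
    let ?W = "\<lambda>x. exp (- l * x) * g x"
    have d: "\<And>x. (?W has_real_derivative exp (- l * x) * ?u x) (at x)"
      using W_DERIV[OF g(1)] .
    obtain \<xi> where xi: "z2 < \<xi>" "\<xi> < 1" "?W 1 - ?W z2 = (1 - z2) * (exp (- l * \<xi>) * ?u \<xi>)"
      using MVT2[of z2 1 ?W "\<lambda>x. exp (- l * x) * ?u x"] d g(6) by blast
    have e: "exp (- l) * g 1 = (1 - z2) * (exp (- l * \<xi>) * ?u \<xi>)"
      using xi(3) g(8) by simp
    have "exp (- l) * g 1 * g 1 = (1 - z2) * (exp (- l * \<xi>) * ?u \<xi>) * g 1"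
      using e by simp
    also have "\<dots> = ((1 - z2) * exp (- l * \<xi>)) * (?u \<xi> * g 1)" by (simp only: mult_ac)
    finally have "exp (- l) * g 1 * g 1 = ((1 - z2) * exp (- l * \<xi>)) * (?u \<xi> * g 1)" .
    moreover have "exp (- l) * g 1 * g 1 > 0"
    proof -
      have sq: "g 1 * g 1 > 0" using False by (metis not_real_square_gt_zero)
      show ?thesis by (metis mult.assoc mult_pos_pos exp_gt_zero sq)
    qed
    moreover have "(1 - z2) * exp (- l * \<xi>) > 0" using g(6) by simp
    ultimately have s1: "?u \<xi> * g 1 > 0" by (metis zero_less_mult_iff not_less_iff_gr_or_eq)
    obtain \<zeta> where ze: "0 < \<zeta>" "\<zeta> < z0" "?W z0 - ?W 0 = (z0 - 0) * (exp (- l * \<zeta>) * ?u \<zeta>)"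
      using MVT2[of 0 z0 ?W "\<lambda>x. exp (- l * x) * ?u x"] d z0p by blast
    have e2: "g 1 = z0 * (exp (- l * \<zeta>) * ?u \<zeta>)"
      using ze(3) g(7) g(2) by simp
    have "g 1 * g 1 = z0 * (exp (- l * \<zeta>) * ?u \<zeta>) * g 1"
      using e2 by simp
    also have "\<dots> = (z0 * exp (- l * \<zeta>)) * (?u \<zeta> * g 1)" by (simp only: mult_ac)
    finally have "g 1 * g 1 = (z0 * exp (- l * \<zeta>)) * (?u \<zeta> * g 1)" .
    moreover have "g 1 * g 1 > 0" using False by (metis not_real_square_gt_zero)
    moreover have "z0 * exp (- l * \<zeta>) > 0" using z0p by simp
    ultimately have s2: "?u \<zeta> * g 1 > 0" by (metis zero_less_mult_iff not_less_iff_gr_or_eq)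
    show ?thesis
    proof (cases "?u 1 * g 1 \<le> 0")
      case True
      have "?u \<xi> * ?u 1 \<le> 0" using s1 True
        by (cases "g 1 > 0") (auto simp: zero_less_mult_iff mult_le_0_iff)
      then obtain w where w: "\<xi> \<le> w" "w \<le> 1" "?u w = 0" using ivt0[OF uc, of \<xi> 1] xi by auto
      show ?thesis
      proof (cases "w = 1")
        case True
        then have "?u 0 = 0" using w u10 by simp
        then show ?thesis using z0p by auto
      next
        case False
        then have "z2 < w \<and> w < 1" using w xi by auto
        then show ?thesis using w by blast
      qed
    next
      case False
      then have "?u 0 * g 1 < 0" using u10 by simp
      then have "?u 0 * ?u \<zeta> \<le> 0" using s2
        by (cases "g 1 > 0") (auto simp: zero_less_mult_iff mult_less_0_iff mult_le_0_iff)
      then obtain w where w: "0 \<le> w" "w \<le> \<zeta>" "?u w = 0" using ivt0[OF uc, of 0 \<zeta>] ze by auto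
      then show ?thesis using ze by auto
    qed
  qed
qed

lemma wrap:
  assumes "isE g" "g 1 = - g 0" "deriv g 1 = - deriv g 0" "tz g"
  shows "tz (op l g)"
proof -
  obtain z0 z1 z2 where z: "0 \<le> z0" "z0 < z1" "z1 < z2" "z2 < 1" "g z0 = 0" "g z1 = 0" "g z2 = 0"
    using assms(4) unfolding tz_def by blast
  obtain w0 where w0: "z0 < w0" "w0 < z1" "op l g w0 = 0" using rolle_op[OF assms(1) z(2) z(5) z(6)] by blast
  obtain w1 where w1: "z1 < w1" "w1 < z2" "op l g w1 = 0" using rolle_op[OF assms(1) z(3) z(6) z(7)] by blast
  obtain w where w: "(z2 < w \<and> w < 1) \<or> (0 \<le> w \<and> w < z0)" "op l g w = 0"
    using third[OF assms(1-3) z(1) _ z(4) z(5) z(7), of l] z by force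
  show ?thesis
  proof (cases "z2 < w \<and> w < 1")
    case True
    then show ?thesis unfolding tz_def using w0 w1 w z
      by (intro exI[of _ w0] exI[of _ w1] exI[of _ w]) auto
  next
    case False
    then show ?thesis unfolding tz_def using w0 w1 w z
      by (intro exI[of _ w] exI[of _ w0] exI[of _ w1]) auto
  qed
qed

lemma iter:
  assumes "isE g" "BC (length ms + 1) g" "tz g"
  shows "tz (opL ms g)"
  using assms
proof (induction ms arbitrary: g)
  case Nil
  then show ?case by simp
next
  case (Cons m ms)
  have "(deriv ^^ 0) g 1 = - (deriv ^^ 0) g 0" using Cons.prems(2) unfolding BC_def
    by (drule_tac spec[of _ 0]) simp
  then have b0: "g 1 = - g 0" by simp
  have "(deriv ^^ 1) g 1 = - (deriv ^^ 1) g 0" using Cons.prems(2) unfolding BC_def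
    by (drule_tac spec[of _ 1]) simp
  then have b1: "deriv g 1 = - deriv g 0" by simp
  have "tz (opL ms (op m g))"
  proof (rule Cons.IH)
    show "isE (op m g)" using Cons.prems(1) by (rule isE_op)
    show "BC (length ms + 1) (op m g)" using BC_op[OF Cons.prems(1)] Cons.prems(2) by simp
    show "tz (op m g)" using wrap[OF Cons.prems(1) b0 b1 Cons.prems(3)] .
  qed
  then show ?case by simp
qed

lemma core3:
  assumes "isE G" "opL ls G = (\<lambda>_. 0)" "3 \<le> length ls" "BC (length ls - 2) G" "tz G"
  shows "G = (\<lambda>_. 0)"
proof -
  define k where "k = length ls - 3"
  define M where "M = take k ls"
  define a where "a = ls ! k"
  define rest where "rest = drop (Suc k) ls"
  have ls: "ls = M @ a # rest" unfolding M_def a_def rest_def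
    using id_take_nth_drop[of k ls] assms(3) k_def by simp
  have lM: "length M = k" unfolding M_def k_def using assms(3) by simp
  have lr: "length rest = 2" unfolding rest_def k_def using assms(3) by simp
  have "length M + 1 = length ls - 2" using lM k_def assms(3) by simp
  then have "tz (opL M G)"
    using iter[OF assms(1) _ assms(5), of M] assms(4) by simp
  then obtain z0 z1 z2 where z: "0 \<le> z0" "z0 < z1" "z1 < z2" "z2 < 1"
      "opL M G z0 = 0" "opL M G z1 = 0" "opL M G z2 = 0"
    unfolding tz_def by blast
  have PE: "isE (opL M G)" using isE_opL assms(1) by blast
  obtain w0 where w0: "z0 < w0" "w0 < z1" "op a (opL M G) w0 = 0" using rolle_op[OF PE z(2) z(5) z(6)] by blast
  obtain w1 where w1: "z1 < w1" "w1 < z2" "op a (opL M G) w1 = 0" using rolle_op[OF PE z(3) z(6) z(7)] by blast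
  have eq: "opL (M @ [a]) G = op a (opL M G)" using opL_append by simp
  have "opL rest (opL (M @ [a]) G) = opL ls G" unfolding ls opL_append[symmetric] by simp
  then have K: "opL rest (opL (M @ [a]) G) = (\<lambda>_. 0)" using assms(2) by simp
  have "opL (M @ [a]) G = (\<lambda>_. 0)"
  proof (rule zero_bound[OF _ K, of 2 "\<lambda>i. if i = 0 then w0 else w1"])
    show "isE (opL (M @ [a]) G)" using isE_opL assms(1) by blast
    show "length rest \<le> 2" using lr by simp
    show "\<forall>i. Suc i < 2 \<longrightarrow> (if i = 0 then w0 else w1) < (if Suc i = 0 then w0 else w1)"
      using w0 w1 z by auto
    show "\<forall>i<2. opL (M @ [a]) G (if i = 0 then w0 else w1) = 0"
      using w0 w1 eq by (auto simp: less_2_cases_iff)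
  qed
  moreover have "length (M @ [a]) = length ls - 2" using lM k_def assms(3) by simp
  then have "BC (length (M @ [a])) G" using assms(4) by simp
  ultimately show ?thesis using BC_zero assms(1) by blast
qed

lemma pat3:
  assumes c: "\<forall>x. isCont G x" and b: "G 1 = - G 0"
    and s: "0 \<le> s1" "s1 < s2" "s2 < s3" "s3 \<le> 1" "G s1 > 0" "G s2 < 0" "G s3 > 0"
  shows "tz G"
proof -
  obtain z0 where z0: "s1 \<le> z0" "z0 \<le> s2" "G z0 = 0"
    using ivt0[OF c, of s1 s2] s by (auto simp: mult_le_0_iff)
  obtain z1 where z1: "s2 \<le> z1" "z1 \<le> s3" "G z1 = 0"
    using ivt0[OF c, of s2 s3] s by (auto simp: mult_le_0_iff)
  have z0': "s1 < z0" "z0 < s2" using z0 s by (auto simp: order.order_iff_strict)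
  have z1': "s2 < z1" "z1 < s3" using z1 s by (auto simp: order.order_iff_strict)
  show ?thesis
  proof (cases "G 1 \<le> 0")
    case True
    obtain w where w: "s3 \<le> w" "w \<le> 1" "G w = 0"
      using ivt0[OF c, of s3 1] s True by (auto simp: mult_le_0_iff)
    have "w \<noteq> s3" using w s by auto
    show ?thesis
    proof (cases "w = 1")
      case True
      then have "G 0 = 0" using w b by simp
      then show ?thesis unfolding tz_def using z0 z1 z0' z1' s
        by (intro exI[of _ 0] exI[of _ z0] exI[of _ z1]) auto
    next
      case False
      then show ?thesis unfolding tz_def using z0 z1 z0' z1' s w \<open>w \<noteq> s3\<close>
        by (intro exI[of _ z0] exI[of _ z1] exI[of _ w]) auto
    qed
  next
    case False
    then have "G 0 < 0" using b by simp
    then obtain w where w: "0 \<le> w" "w \<le> s1" "G w = 0"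
      using ivt0[OF c, of 0 s1] s by (auto simp: mult_le_0_iff)
    have "w \<noteq> s1" using w s by auto
    then show ?thesis unfolding tz_def using z0 z1 z0' z1' s w
      by (intro exI[of _ w] exI[of _ z0] exI[of _ z1]) auto
  qed
qed



fun Tf :: "real list \<Rightarrow> real \<Rightarrow> real poly \<Rightarrow> real poly" where
  "Tf [] \<mu> p = p"
| "Tf (l # ls) \<mu> p = Tf ls \<mu> (pderiv p + smult (\<mu> - l) p)"

lemma opL_E: "finite J \<Longrightarrow> opL ls (E p \<mu> J) = E (\<lambda>j. Tf ls (\<mu> j) (p j)) \<mu> J"
  by (induction ls arbitrary: p) (auto simp: op_E)

lemma Tf_zero: "Tf ls \<mu> 0 = 0"
  by (induction ls) auto

lemma Tf_deg: "degree (Tf ls \<mu> p) \<le> degree p"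
proof (induction ls arbitrary: p)
  case (Cons l ls)
  have "degree (pderiv p + smult (\<mu> - l) p) \<le> degree p"
    by (rule order.trans[OF degree_add_le_max]) (auto simp: degree_pderiv)
  then show ?case using Cons.IH[of "pderiv p + smult (\<mu> - l) p"] by simp
qed simp

lemma Tf_rep: "degree p < n \<Longrightarrow> Tf (replicate n \<mu>) \<mu> p = 0"
proof (induction n arbitrary: p)
  case 0
  then show ?case by simp
next
  case (Suc n)
  show ?case
  proof (cases "degree p = 0")
    case True
    then have "pderiv p = 0" using pderiv_eq_0_iff by blast
    then show ?thesis by (simp add: Tf_zero)
  next
    case False
    then have "degree (pderiv p) < n" using Suc.prems by (simp add: degree_pderiv)
    then show ?thesis using Suc.IH by simp
  qed
qed

lemma Tf_app: "Tf (as @ bs) \<mu> p = Tf bs \<mu> (Tf as \<mu> p)"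
  by (induction as arbitrary: p) auto

lemma Tf_kill: "degree p < n \<Longrightarrow> Tf (as @ replicate n \<mu> @ bs) \<mu> p = 0"
proof -
  assume "degree p < n"
  then have "degree (Tf as \<mu> p) < n" using Tf_deg[of as \<mu> p] by simp
  then show ?thesis by (simp add: Tf_app Tf_rep Tf_zero)
qed

lemma LS_split:
  assumes "j \<in> {1..r}"
  shows "\<exists>as bs. concat (map (\<lambda>j. replicate (\<sigma> j) (\<eta> j)) [1..<Suc r])
           = as @ replicate (\<sigma> j) (\<eta> j) @ bs"
proof -
  have "[1..<j + (Suc r - j)] = [1..<j] @ [j..<j + (Suc r - j)]"
    using assms upt_add_eq_append[of 1 j "Suc r - j"] by simp
  moreover have "j + (Suc r - j) = Suc r" using assms by simp
  ultimately have "[1..<Suc r] = [1..<j] @ [j..<Suc r]" by simp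
  also have "[j..<Suc r] = j # [Suc j..<Suc r]" using assms upt_conv_Cons by simp
  finally have eq: "[1..<Suc r] = [1..<j] @ j # [Suc j..<Suc r]" .
  show ?thesis
    apply (rule exI[of _ "concat (map (\<lambda>j. replicate (\<sigma> j) (\<eta> j)) [1..<j])"],
        rule exI[of _ "concat (map (\<lambda>j. replicate (\<sigma> j) (\<eta> j)) [Suc j..<Suc r])"])
    apply (subst eq)
    apply (simp only: map_append concat_append list.map concat.simps append_assoc)
    done
qed

lemma Ker_f:
  assumes "\<And>j. j \<in> {1..r} \<Longrightarrow> \<sigma> j \<ge> 1" "\<And>j. j \<in> {1..r} \<Longrightarrow> degree (q j) = \<sigma> j - 1"
  shows "opL (concat (map (\<lambda>j. replicate (\<sigma> j) (\<eta> j)) [1..<Suc r])) (E q \<eta> {1..r}) = (\<lambda>_. 0)"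
proof -
  let ?LS = "concat (map (\<lambda>j. replicate (\<sigma> j) (\<eta> j)) [1..<Suc r])"
  have "\<And>j. j \<in> {1..r} \<Longrightarrow> Tf ?LS (\<eta> j) (q j) = 0"
  proof -
    fix j assume j: "j \<in> {1..r}"
    obtain as bs where "?LS = as @ replicate (\<sigma> j) (\<eta> j) @ bs" using LS_split[OF j] by blast
    moreover have "degree (q j) < \<sigma> j" using assms j by force
    ultimately show "Tf ?LS (\<eta> j) (q j) = 0" using Tf_kill by simp
  qed
  then show ?thesis by (auto simp: opL_E E_def intro!: ext)
qed

lemma length_LS: "length (concat (map (\<lambda>j. replicate (\<sigma> j) (\<eta> j)) [1..<Suc r])) = (\<Sum>j=1..r. \<sigma> j)"
proof -
  have "length (concat (map (\<lambda>j. replicate (\<sigma> j) (\<eta> j)) [1..<Suc r])) = sum_list (map \<sigma> [1..<Suc r])"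
    by (simp add: length_concat comp_def)
  also have "\<dots> = sum \<sigma> (set [1..<Suc r])" by (rule sum_set_upt_conv_sum_list_nat[symmetric])
  also have "set [1..<Suc r] = {1..r}" by (simp only: set_upt atLeastLessThanSuc_atLeastAtMost)
  finally show ?thesis .
qed



lemma h_shift_nat:
  fixes h :: "real \<Rightarrow> real"
  assumes "\<forall>x. h (x + 1) = - (h x :: real)"
  shows "h (x + real n) = (if even n then h x else - h x)"
proof (induction n)
  case (Suc n)
  have "h (x + real (Suc n)) = h ((x + real n) + 1)" by (simp add: algebra_simps)
  also have "\<dots> = - h (x + real n)" using assms by blast
  finally show ?case using Suc by simp
qed simp

lemma h_shift:
  fixes h :: "real \<Rightarrow> real"
  assumes "\<forall>x. h (x + 1) = - (h x :: real)"
  shows "h (x + of_int k) = (if even k then h x else - h x)"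
proof (cases "k \<ge> 0")
  case True
  then obtain n where "k = int n" by (metis nonneg_eq_int)
  then show ?thesis using h_shift_nat[of h x n] assms by simp
next
  case False
  then obtain n where k: "k = - int n" by (metis nonpos_int_cases linear)
  have "h x = h ((x - real n) + real n)" by simp
  also have "\<dots> = (if even n then h (x - real n) else - h (x - real n))"
    using h_shift_nat[of h "x - real n" n] assms by blast
  finally show ?thesis using k by (auto split: if_splits)
qed

lemma mono_shift:
  fixes h :: "real \<Rightarrow> real"
  assumes "\<forall>x. h (x + 1) = - (h x :: real)"
    and "mono_on {a..<a+1} h \<or> antimono_on {a..<a+1} h"
  shows "mono_on {a + of_int k..<a + of_int k + 1} h \<or> antimono_on {a + of_int k..<a + of_int k + 1} h"
proof -
  have e: "h y = (if even k then h (y - of_int k) else - h (y - of_int k))" for y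
    using h_shift[of h "y - of_int k" k] assms(1) by simp
  have m: "\<And>y. y \<in> {a + of_int k..<a + of_int k + 1} \<longleftrightarrow> y - of_int k \<in> {a..<a+1}" by auto
  show ?thesis
  proof (cases "even k")
    case True
    have e': "h y = h (y - of_int k)" for y using e[of y] True by simp
    show ?thesis using assms(2)
    proof
      assume M: "mono_on {a..<a+1} h"
      have "mono_on {a + of_int k..<a + of_int k + 1} h"
      proof (rule mono_onI)
        fix x y assume "x \<in> {a + of_int k..<a + of_int k + 1}" "y \<in> {a + of_int k..<a + of_int k + 1}" "x \<le> y"
        then have "h (x - of_int k) \<le> h (y - of_int k)" using M m by (intro mono_onD[OF M]) auto
        then show "h x \<le> h y" using e'[of x] e'[of y] by simp
      qed
      then show ?thesis by blast
    next
      assume M: "antimono_on {a..<a+1} h"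
      have "antimono_on {a + of_int k..<a + of_int k + 1} h"
      proof (rule monotone_onI)
        fix x y assume "x \<in> {a + of_int k..<a + of_int k + 1}" "y \<in> {a + of_int k..<a + of_int k + 1}" "x \<le> y"
        then have "h (y - of_int k) \<le> h (x - of_int k)" using M m by (intro monotone_onD[OF M]) auto
        then show "h y \<le> h x" using e'[of x] e'[of y] by simp
      qed
      then show ?thesis by blast
    qed
  next
    case False
    have e': "h y = - h (y - of_int k)" for y using e[of y] False by simp
    show ?thesis using assms(2)
    proof
      assume M: "mono_on {a..<a+1} h"
      have "antimono_on {a + of_int k..<a + of_int k + 1} h"
      proof (rule monotone_onI)
        fix x y assume "x \<in> {a + of_int k..<a + of_int k + 1}" "y \<in> {a + of_int k..<a + of_int k + 1}" "x \<le> y"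
        then have "h (x - of_int k) \<le> h (y - of_int k)" using M m by (intro mono_onD[OF M]) auto
        then show "h y \<le> h x" using e'[of x] e'[of y] by simp
      qed
      then show ?thesis by blast
    next
      assume M: "antimono_on {a..<a+1} h"
      have "mono_on {a + of_int k..<a + of_int k + 1} h"
      proof (rule mono_onI)
        fix x y assume "x \<in> {a + of_int k..<a + of_int k + 1}" "y \<in> {a + of_int k..<a + of_int k + 1}" "x \<le> y"
        then have "h (y - of_int k) \<le> h (x - of_int k)" using M m by (intro monotone_onD[OF M]) auto
        then show "h x \<le> h y" using e'[of x] e'[of y] by simp
      qed
      then show ?thesis by blast
    qed
  qed
qed



lemma hBC:
  fixes h f :: "real \<Rightarrow> real"
  assumes smooth: "C_k p h" and antiper: "\<forall>x. h (x + 1) = - h x"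
    and eq: "\<forall>x. 0 \<le> x \<and> x < 1 \<longrightarrow> h x = f x" and fE: "isE f"
  shows "BC (Suc p) f"
proof -
  let ?H = "\<lambda>m. (deriv ^^ m) h"
  have dif: "\<And>k x. k < p \<Longrightarrow> (?H k has_real_derivative ?H (Suc k) x) (at x)"
    using smooth unfolding C_k_def by (simp add: DERIV_deriv_iff_real_differentiable)
  have cont: "\<And>m x. m \<le> p \<Longrightarrow> isCont (?H m) x"
  proof -
    fix m x assume "m \<le> p"
    show "isCont (?H m) x"
    proof (cases "m < p")
      case True
      then show ?thesis using dif DERIV_isCont by blast
    next
      case False
      then have "m = p" using \<open>m \<le> p\<close> by simp
      then show ?thesis using smooth unfolding C_k_def
        by (simp add: continuous_on_eq_continuous_at)
    qed
  qed
  have per: "\<And>m. m \<le> p \<Longrightarrow> \<forall>x. ?H m (x + 1) = - ?H m x"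
  proof -
    fix m assume "m \<le> p"
    then show "\<forall>x. ?H m (x + 1) = - ?H m x"
    proof (induction m)
      case 0
      then show ?case using antiper by simp
    next
      case (Suc m)
      then have mp: "m < p" by simp
      have IH: "(\<lambda>y. ?H m (y + 1)) = (\<lambda>y. - ?H m y)" using Suc by auto
      show ?case
      proof
        fix x
        have "((\<lambda>y. ?H m (y + 1)) has_real_derivative ?H (Suc m) (x + 1)) (at x)"
          using dif[OF mp, of "x + 1"] DERIV_shift by blast
        then have d1: "((\<lambda>y. - ?H m y) has_real_derivative ?H (Suc m) (x + 1)) (at x)"
          using IH by simp
        have d2: "((\<lambda>y. - ?H m y) has_real_derivative - ?H (Suc m) x) (at x)"
          using DERIV_minus[OF dif[OF mp, of x]] .
        show "?H (Suc m) (x + 1) = - ?H (Suc m) x" using DERIV_unique[OF d1 d2] .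
      qed
    qed
  qed
  have loc: "\<And>m. m \<le> p \<Longrightarrow> \<forall>x\<in>{0<..<1}. ?H m x = (deriv ^^ m) f x"
  proof -
    fix m assume "m \<le> p"
    then show "\<forall>x\<in>{0<..<1}. ?H m x = (deriv ^^ m) f x"
    proof (induction m)
      case 0
      then show ?case using eq by simp
    next
      case (Suc m)
      show ?case
      proof
        fix x :: real assume x: "x \<in> {0<..<1}"
        have "((deriv ^^ m) f has_real_derivative (deriv ^^ Suc m) f x) (at x)"
          using isE_DERIV[OF isE_funpow[OF fE, of m]] by simp
        then have "(?H m has_real_derivative (deriv ^^ Suc m) f x) (at x)"
          by (rule has_field_derivative_transform_within_open[OF _ open_greaterThanLessThan x])
             (use Suc in auto)
        then show "?H (Suc m) x = (deriv ^^ Suc m) f x" using DERIV_imp_deriv by simp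
      qed
    qed
  qed
  show ?thesis unfolding BC_def
  proof (intro allI impI)
    fix m assume "m < Suc p"
    then have mp: "m \<le> p" by simp
    have l1: "(?H m \<longlongrightarrow> ?H m 1) (at_left 1)"
      using cont[OF mp, of 1] unfolding isCont_def by (rule tendsto_mono[OF at_le, rotated]) simp
    have "((deriv ^^ m) f \<longlongrightarrow> (deriv ^^ m) f 1) (at_left 1)"
      using isE_isCont[OF isE_funpow[OF fE, of m], of 1] unfolding isCont_def
      by (rule tendsto_mono[OF at_le, rotated]) simp
    moreover have "eventually (\<lambda>x. (deriv ^^ m) f x = ?H m x) (at_left (1::real))"
      by (rule eventually_at_leftI[of 0]) (use loc[OF mp] in auto)
    ultimately have l1': "(?H m \<longlongrightarrow> (deriv ^^ m) f 1) (at_left 1)"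
      using Lim_transform_eventually by blast
    have e1: "?H m 1 = (deriv ^^ m) f 1"
      using tendsto_unique[OF trivial_limit_at_left_real l1 l1'] .
    have l0: "(?H m \<longlongrightarrow> ?H m 0) (at_right 0)"
      using cont[OF mp, of 0] unfolding isCont_def by (rule tendsto_mono[OF at_le, rotated]) simp
    have "((deriv ^^ m) f \<longlongrightarrow> (deriv ^^ m) f 0) (at_right 0)"
      using isE_isCont[OF isE_funpow[OF fE, of m], of 0] unfolding isCont_def
      by (rule tendsto_mono[OF at_le, rotated]) simp
    moreover have "eventually (\<lambda>x. (deriv ^^ m) f x = ?H m x) (at_right (0::real))"
      by (rule eventually_at_rightI[of _ 1]) (use loc[OF mp] in auto)
    ultimately have l0': "(?H m \<longlongrightarrow> (deriv ^^ m) f 0) (at_right 0)"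
      using Lim_transform_eventually by blast
    have e0: "?H m 0 = (deriv ^^ m) f 0"
      using tendsto_unique[OF trivial_limit_at_right_real l0 l0'] .
    have "?H m (0 + 1) = - ?H m 0" using per[OF mp] by blast
    then show "(deriv ^^ m) f 1 = - (deriv ^^ m) f 0" using e0 e1 by simp
  qed
qed



lemma splitA:
  fixes g :: "real \<Rightarrow> real"
  assumes no1: "\<not>(\<exists>s1 s2 s3. 0 \<le> s1 \<and> s1 < s2 \<and> s2 < s3 \<and> s3 \<le> 1 \<and> g s1 > 0 \<and> g s2 < 0 \<and> g s3 > 0)"
    and no2: "\<not>(\<exists>s1 s2 s3. 0 \<le> s1 \<and> s1 < s2 \<and> s2 < s3 \<and> s3 \<le> 1 \<and> g s1 < 0 \<and> g s2 > 0 \<and> g s3 < 0)"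
    and ab: "0 \<le> a" "a < b" "b \<le> 1" "g a < 0" "g b > 0"
  shows "\<exists>t. 0 \<le> t \<and> t \<le> 1 \<and> (\<forall>x. 0 < x \<and> x < t \<longrightarrow> g x \<le> 0) \<and> (\<forall>x. t < x \<and> x < 1 \<longrightarrow> g x \<ge> 0)"
proof -
  define A where "A = {x. 0 \<le> x \<and> x \<le> 1 \<and> g x < 0}"
  have aA: "a \<in> A" using ab unfolding A_def by simp
  have bdd: "bdd_above A" unfolding A_def by (rule bdd_aboveI[of _ 1]) auto
  have ne: "A \<noteq> {}" using aA by blast
  define t where "t = Sup A"
  have t0: "a \<le> t" unfolding t_def using cSup_upper[OF aA bdd] .
  have t1: "t \<le> 1" unfolding t_def by (rule cSup_least[OF ne]) (auto simp: A_def)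
  have i: "\<forall>x. t < x \<and> x < 1 \<longrightarrow> g x \<ge> 0"
  proof (intro allI impI)
    fix x assume x: "t < x \<and> x < 1"
    show "g x \<ge> 0"
    proof (rule ccontr)
      assume "\<not> g x \<ge> 0"
      then have "x \<in> A" using x t0 ab unfolding A_def by auto
      then have "x \<le> t" unfolding t_def using cSup_upper[OF _ bdd] by blast
      then show False using x by simp
    qed
  qed
  have ii: "\<forall>x. 0 < x \<and> x < t \<longrightarrow> g x \<le> 0"
  proof (intro allI impI)
    fix x assume x: "0 < x \<and> x < t"
    show "g x \<le> 0"
    proof (rule ccontr)
      assume gx: "\<not> g x \<le> 0"
      obtain y where y: "y \<in> A" "x < y" using x less_cSup_iff[OF ne bdd, of x] t_def by auto
      have y': "0 \<le> y" "y \<le> 1" "g y < 0" using y unfolding A_def by auto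
      show False
      proof (cases "y < b")
        case True
        have "0 \<le> x \<and> x < y \<and> y < b \<and> b \<le> 1 \<and> g x > 0 \<and> g y < 0 \<and> g b > 0"
          using True x y y' gx ab by auto
        then show False using no1 by blast
      next
        case False
        then have "b < y" using y' ab by (cases "b = y") auto
        then have "0 \<le> a \<and> a < b \<and> b < y \<and> y \<le> 1 \<and> g a < 0 \<and> g b > 0 \<and> g y < 0"
          using ab y' by auto
        then show False using no2 by blast
      qed
    qed
  qed
  show ?thesis using i ii t0 t1 ab by (intro exI[of _ t]) auto
qed

lemma split:
  fixes g :: "real \<Rightarrow> real"
  assumes no1: "\<not>(\<exists>s1 s2 s3. 0 \<le> s1 \<and> s1 < s2 \<and> s2 < s3 \<and> s3 \<le> 1 \<and> g s1 > 0 \<and> g s2 < 0 \<and> g s3 > 0)"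
    and no2: "\<not>(\<exists>s1 s2 s3. 0 \<le> s1 \<and> s1 < s2 \<and> s2 < s3 \<and> s3 \<le> 1 \<and> g s1 < 0 \<and> g s2 > 0 \<and> g s3 < 0)"
  shows "\<exists>t. 0 \<le> t \<and> t \<le> 1 \<and>
     ((\<forall>x. 0 < x \<and> x < t \<longrightarrow> g x \<le> 0) \<and> (\<forall>x. t < x \<and> x < 1 \<longrightarrow> g x \<ge> 0) \<or>
      (\<forall>x. 0 < x \<and> x < t \<longrightarrow> g x \<ge> 0) \<and> (\<forall>x. t < x \<and> x < 1 \<longrightarrow> g x \<le> 0))"
proof (cases "\<exists>a b. 0 \<le> a \<and> a < b \<and> b \<le> 1 \<and> g a < 0 \<and> g b > 0")
  case True
  then obtain a b where "0 \<le> a" "a < b" "b \<le> 1" "g a < 0" "g b > 0" by blast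
  then show ?thesis using splitA[OF no1 no2] by blast
next
  case nA: False
  show ?thesis
  proof (cases "\<exists>a b. 0 \<le> a \<and> a < b \<and> b \<le> 1 \<and> g a > 0 \<and> g b < 0")
    case True
    then obtain a b where ab: "0 \<le> a" "a < b" "b \<le> 1" "g a > 0" "g b < 0" by blast
    have n1: "\<not>(\<exists>s1 s2 s3. 0 \<le> s1 \<and> s1 < s2 \<and> s2 < s3 \<and> s3 \<le> 1 \<and> - g s1 > 0 \<and> - g s2 < 0 \<and> - g s3 > 0)"
      using no2 by simp
    have n2: "\<not>(\<exists>s1 s2 s3. 0 \<le> s1 \<and> s1 < s2 \<and> s2 < s3 \<and> s3 \<le> 1 \<and> - g s1 < 0 \<and> - g s2 > 0 \<and> - g s3 < 0)"
      using no1 by simp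
    have "- g a < 0" "- g b > 0" using ab by auto
    from splitA[of "\<lambda>x. - g x", OF n1 n2 ab(1-3) this] obtain t where
      tt: "0 \<le> t" "t \<le> 1" "\<forall>x. 0 < x \<and> x < t \<longrightarrow> - g x \<le> 0" "\<forall>x. t < x \<and> x < 1 \<longrightarrow> - g x \<ge> 0"
      by blast
    have "(\<forall>x. 0 < x \<and> x < t \<longrightarrow> g x \<ge> 0) \<and> (\<forall>x. t < x \<and> x < 1 \<longrightarrow> g x \<le> 0)"
      using tt(3,4) by auto
    then show ?thesis using tt(1,2) by blast
  next
    case nB: False
    show ?thesis
    proof (cases "\<exists>x. 0 \<le> x \<and> x \<le> 1 \<and> g x < 0")
      case True
      then obtain x where x: "0 \<le> x" "x \<le> 1" "g x < 0" by blast
      have "\<forall>y. 0 < y \<and> y < 1 \<longrightarrow> g y \<le> 0"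
      proof (intro allI impI, rule ccontr)
        fix y assume y: "0 < y \<and> y < 1" "\<not> g y \<le> 0"
        then have "x < y \<or> y < x" using x by (cases "x = y") auto
        then show False
        proof
          assume "x < y"
          then have "0 \<le> x \<and> x < y \<and> y \<le> 1 \<and> g x < 0 \<and> g y > 0" using x y by auto
          then show False using nA by blast
        next
          assume "y < x"
          then have "0 \<le> y \<and> y < x \<and> x \<le> 1 \<and> g y > 0 \<and> g x < 0" using x y by auto
          then show False using nB by blast
        qed
      qed
      then show ?thesis by (intro exI[of _ 0]) auto
    next
      case False
      have "\<forall>y. 0 < y \<and> y < 1 \<longrightarrow> g y \<ge> 0"
      proof (intro allI impI)
        fix y :: real assume "0 < y \<and> y < 1"
        then show "g y \<ge> 0" using False by (meson less_imp_le not_le)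
      qed
      then show ?thesis by (intro exI[of _ 0]) auto
    qed
  qed
qed

lemma mono_deriv:
  fixes f :: "real \<Rightarrow> real"
  assumes d: "\<And>x. (f has_real_derivative f' x) (at x)" and s: "\<forall>x. a < x \<and> x < b \<longrightarrow> f' x \<ge> 0"
  shows "mono_on {a..b} f"
proof (rule mono_onI)
  fix x y assume xy: "x \<in> {a..b}" "y \<in> {a..b}" "x \<le> y"
  show "f x \<le> f y"
  proof (rule DERIV_nonneg_imp_increasing_open[OF xy(3)])
    fix z assume "x < z" "z < y"
    then show "\<exists>D. (f has_real_derivative D) (at z) \<and> 0 \<le> D" using d s xy by fastforce
  next
    show "continuous_on {x..y} f" using d by (meson DERIV_isCont continuous_at_imp_continuous_on)
  qed
qed

lemma antimono_deriv:
  fixes f :: "real \<Rightarrow> real"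
  assumes d: "\<And>x. (f has_real_derivative f' x) (at x)" and s: "\<forall>x. a < x \<and> x < b \<longrightarrow> f' x \<le> 0"
  shows "antimono_on {a..b} f"
proof (rule monotone_onI)
  fix x y assume xy: "x \<in> {a..b}" "y \<in> {a..b}" "x \<le> y"
  show "f x \<ge> f y"
  proof (rule DERIV_nonpos_imp_decreasing_open[OF xy(3)])
    fix z assume "x < z" "z < y"
    then show "\<exists>D. (f has_real_derivative D) (at z) \<and> D \<le> 0" using d s xy by fastforce
  next
    show "continuous_on {x..y} f" using d by (meson DERIV_isCont continuous_at_imp_continuous_on)
  qed
qed

lemma glue:
  fixes f h :: "real \<Rightarrow> real"
  assumes t: "0 \<le> t" "t \<le> 1" and M: "mono_on {t..1} f" and A: "antimono_on {0..t} f"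
    and b: "t = 0 \<or> f 1 = - f 0"
    and eq: "\<forall>x. 0 \<le> x \<and> x < 1 \<longrightarrow> h x = f x" and ap: "\<forall>x. h (x + 1) = - h x"
  shows "mono_on {t..<t+1} h"
proof (rule mono_onI)
  fix x y assume x: "x \<in> {t..<t+1}" and y: "y \<in> {t..<t+1}" and xy: "x \<le> y"
  have hs: "\<And>z. 1 \<le> z \<Longrightarrow> z < 2 \<Longrightarrow> h z = - f (z - 1)"
  proof -
    fix z :: real assume "1 \<le> z" "z < 2"
    have "h ((z - 1) + 1) = - h (z - 1)" using ap by blast
    then show "h z = - f (z - 1)" using eq \<open>1 \<le> z\<close> \<open>z < 2\<close> by simp
  qed
  show "h x \<le> h y"
  proof (cases "y < 1")
    case True
    then have "h x = f x" "h y = f y" using eq x y t xy by auto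
    moreover have "f x \<le> f y" using mono_onD[OF M] x y xy True by auto
    ultimately show ?thesis by simp
  next
    case False
    then have hy: "h y = - f (y - 1)" using hs y t by auto
    have ya: "f (y - 1) \<le> f 0"
      using monotone_onD[OF A, of 0 "y - 1"] False y t by auto
    show ?thesis
    proof (cases "x < 1")
      case True
      then have "t \<noteq> 0" using False y by auto
      then have f10: "f 1 = - f 0" using b by simp
      have "f x \<le> f 1" using mono_onD[OF M] x True t by auto
      moreover have "h x = f x" using eq x t True by auto
      ultimately show ?thesis using hy ya f10 by simp
    next
      case False
      then have hx: "h x = - f (x - 1)" using hs x t by auto
      have "f (y - 1) \<le> f (x - 1)"
        using monotone_onD[OF A, of "x - 1" "y - 1"] False x y xy by auto
      then show ?thesis using hx hy by simp
    qed
  qed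
qed



theorem mainTheorem6:
  fixes r :: nat and \<eta> :: "nat \<Rightarrow> real" and q :: "nat \<Rightarrow> real poly"
    and \<sigma> :: "nat \<Rightarrow> nat" and \<gamma> :: nat and h :: "real \<Rightarrow> real"
  assumes distinct: "inj_on \<eta> {1..r}"
    and q_nz: "\<And>j. j \<in> {1..r} \<Longrightarrow> q j \<noteq> 0"
    and sigma_pos: "\<And>j. j \<in> {1..r} \<Longrightarrow> \<sigma> j \<ge> 1"
    and deg: "\<And>j. j \<in> {1..r} \<Longrightarrow> degree (q j) = \<sigma> j - 1"
    and gamma: "\<gamma> = (\<Sum>j=1..r. \<sigma> j)"
    and smooth: "\<gamma> \<ge> 2 \<Longrightarrow> C_k (\<gamma> - 2) h"
    and abscont: "\<gamma> \<ge> 2 \<Longrightarrow> abs_continuous_real ((deriv ^^ (\<gamma> - 2)) h)"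
    and antiper: "\<And>x. h (x + 1) = - h x"
    and repr: "\<And>x. 0 \<le> x \<Longrightarrow> x < 1 \<Longrightarrow> h x = (\<Sum>j=1..r. poly (q j) x * exp (\<eta> j * x))"
  shows "\<exists>x0::real. \<forall>k::int.
           mono_on {x0 + of_int k ..< x0 + of_int k + 1} h \<or>
           antimono_on {x0 + of_int k ..< x0 + of_int k + 1} h"
proof -
  define f where "f = E q \<eta> {1..r}"
  define LS where "LS = concat (map (\<lambda>j. replicate (\<sigma> j) (\<eta> j)) [1..<Suc r])"
  have fE: "isE f" unfolding f_def isE_def by blast
  have eq: "\<forall>x. 0 \<le> x \<and> x < 1 \<longrightarrow> h x = f x" using repr unfolding f_def E_def by simp
  have ap: "\<forall>x. h (x + 1) = - h x" using antiper by blast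
  have KerF: "opL LS f = (\<lambda>_. 0)" unfolding LS_def f_def using Ker_f[of r \<sigma> q \<eta>] sigma_pos deg by blast
  have lenLS: "length LS = \<gamma>" unfolding LS_def gamma using length_LS by blast
  define G where "G = deriv f"
  have GE: "isE G" using isE_deriv fE G_def by blast
  have KerG: "opL LS G = (\<lambda>_. 0)"
  proof
    fix x
    have "opL LS G = deriv (opL LS f)" using deriv_opL[OF fE] G_def by simp
    also have "\<dots> = deriv (\<lambda>_. 0)" using KerF by simp
    finally show "opL LS G x = 0" using DERIV_imp_deriv[OF DERIV_const[of 0 "at x"]] by simp
  qed
  have dF: "\<And>x. (f has_real_derivative G x) (at x)" using isE_DERIV fE G_def by blast
  have Gc: "\<forall>x. isCont G x" using isE_isCont GE by blast
  have final: "\<exists>x0. mono_on {x0..<x0+1} h \<or> antimono_on {x0..<x0+1} h"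
  proof (cases "\<gamma> \<le> 1")
    case True
    have sg: "(\<forall>x. 0 < x \<and> x < 1 \<longrightarrow> G x \<ge> 0) \<or> (\<forall>x. 0 < x \<and> x < 1 \<longrightarrow> G x \<le> 0)"
    proof (rule ccontr)
      assume "\<not> ?thesis"
      then obtain x y where x: "0 < x" "x < 1" "G x < 0" and y: "0 < y" "y < 1" "G y > 0"
        by (meson not_le)
      have "G (min x y) * G (max x y) \<le> 0"
        using x y by (cases "x \<le> y") (auto simp: min_def max_def mult_le_0_iff)
      then obtain w where w: "G w = 0" using ivt0[OF Gc, of "min x y" "max x y"] by (meson min.cobounded1 max.cobounded1 order.trans)
      have "G = (\<lambda>_. 0)"
        by (rule zero_bound[OF GE KerG, of 1 "\<lambda>_. w"]) (use True lenLS w in auto)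
      then show False using x by simp
    qed
    then show ?thesis
    proof
      assume "\<forall>x. 0 < x \<and> x < 1 \<longrightarrow> G x \<ge> 0"
      then have M: "mono_on {0..1} f" using mono_deriv[OF dF] by blast
      have "mono_on {0..<0+1} h"
      proof (rule mono_onI)
        fix a b :: real assume "a \<in> {0..<0+1}" "b \<in> {0..<0+1}" "a \<le> b"
        then show "h a \<le> h b" using eq mono_onD[OF M, of a b] by auto
      qed
      then show ?thesis by blast
    next
      assume "\<forall>x. 0 < x \<and> x < 1 \<longrightarrow> G x \<le> 0"
      then have M: "antimono_on {0..1} f" using antimono_deriv[OF dF] by blast
      have "antimono_on {0..<0+1} h"
      proof (rule monotone_onI)
        fix a b :: real assume "a \<in> {0..<0+1}" "b \<in> {0..<0+1}" "a \<le> b"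
        then show "h a \<ge> h b" using eq monotone_onD[OF M, of a b] by auto
      qed
      then show ?thesis by blast
    qed
  next
    case False
    then have g2: "\<gamma> \<ge> 2" by simp
    have BCf: "BC (Suc (\<gamma> - 2)) f" using hBC[OF smooth[OF g2] ap eq fE] .
    have BCG: "BC (\<gamma> - 2) G" unfolding BC_def
    proof (intro allI impI)
      fix m assume "m < \<gamma> - 2"
      then have "Suc m < Suc (\<gamma> - 2)" by simp
      then have "(deriv ^^ Suc m) f 1 = - (deriv ^^ Suc m) f 0" using BCf unfolding BC_def by blast
      moreover have "(deriv ^^ m) G = (deriv ^^ Suc m) f" unfolding G_def by (simp only: funpow_Suc_right comp_def)
      ultimately show "(deriv ^^ m) G 1 = - (deriv ^^ m) G 0" by simp
    qed
    have "(deriv ^^ 0) f 1 = - (deriv ^^ 0) f 0" using BCf unfolding BC_def by (drule_tac spec[of _ 0]) simp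
    then have f10: "f 1 = - f 0" by simp
    have nopat: "False" if gc: "\<forall>x. isCont g x" and gz: "\<forall>x. g x = 0 \<longleftrightarrow> G x = 0"
      and gb: "\<gamma> \<ge> 3 \<Longrightarrow> g 1 = - g 0"
      and s: "0 \<le> s1" "s1 < s2" "s2 < s3" "s3 \<le> 1" "g s1 > 0" "g s2 < 0" "g s3 > 0"
      for g :: "real \<Rightarrow> real" and s1 s2 s3 :: real
    proof -
      have G0: "G = (\<lambda>_. 0)"
      proof (cases "\<gamma> \<ge> 3")
        case True
        have "tz g" using pat3[OF gc gb[OF True] s] .
        then have "tz G" unfolding tz_def using gz by blast
        then show ?thesis using core3[OF GE KerG] True lenLS BCG by simp
      next
        case False
        obtain z0 where z0: "s1 \<le> z0" "z0 \<le> s2" "g z0 = 0"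
          using ivt0[OF gc, of s1 s2] s by (auto simp: mult_le_0_iff)
        obtain z1 where z1: "s2 \<le> z1" "z1 \<le> s3" "g z1 = 0"
          using ivt0[OF gc, of s2 s3] s by (auto simp: mult_le_0_iff)
        have "z0 < z1" using z0 z1 s by (cases "z0 = z1") auto
        show ?thesis
        proof (rule zero_bound[OF GE KerG, of 2 "\<lambda>i. if i = 0 then z0 else z1"])
          show "length LS \<le> 2" using lenLS False by simp
          show "\<forall>i. Suc i < 2 \<longrightarrow> (if i = 0 then z0 else z1) < (if Suc i = 0 then z0 else z1)"
            using \<open>z0 < z1\<close> by auto
          show "\<forall>i<2. G (if i = 0 then z0 else z1) = 0" using z0 z1 gz by (auto simp: less_2_cases_iff)
        qed
      qed
      have "g s1 = 0" using gz G0 by simp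
      then show False using s by simp
    qed
    have G10: "\<gamma> \<ge> 3 \<Longrightarrow> G 1 = - G 0"
    proof -
      assume "\<gamma> \<ge> 3"
      then have "(deriv ^^ 0) G 1 = - (deriv ^^ 0) G 0" using BCG unfolding BC_def by (drule_tac spec[of _ 0]) simp
      then show "G 1 = - G 0" by simp
    qed
    have no1: "\<not>(\<exists>s1 s2 s3. 0 \<le> s1 \<and> s1 < s2 \<and> s2 < s3 \<and> s3 \<le> 1 \<and> G s1 > 0 \<and> G s2 < 0 \<and> G s3 > 0)"
      using nopat[OF Gc _ G10] by blast
    have Gc': "\<forall>x. isCont (\<lambda>x. - G x) x" using Gc by simp
    have no2: "\<not>(\<exists>s1 s2 s3. 0 \<le> s1 \<and> s1 < s2 \<and> s2 < s3 \<and> s3 \<le> 1 \<and> G s1 < 0 \<and> G s2 > 0 \<and> G s3 < 0)"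
    proof
      assume "\<exists>s1 s2 s3. 0 \<le> s1 \<and> s1 < s2 \<and> s2 < s3 \<and> s3 \<le> 1 \<and> G s1 < 0 \<and> G s2 > 0 \<and> G s3 < 0"
      then obtain s1 s2 s3 where s: "0 \<le> s1" "s1 < s2" "s2 < s3" "s3 \<le> 1" "G s1 < 0" "G s2 > 0" "G s3 < 0"
        by blast
      show False
      proof (rule nopat[OF Gc', of s1 s2 s3])
        show "\<forall>x. (- G x = 0) = (G x = 0)" by simp
        show "\<gamma> \<ge> 3 \<Longrightarrow> - G 1 = - (- G 0)" using G10 by simp
      qed (use s in auto)
    qed
    obtain t where t: "0 \<le> t" "t \<le> 1"
      and tt: "(\<forall>x. 0 < x \<and> x < t \<longrightarrow> G x \<le> 0) \<and> (\<forall>x. t < x \<and> x < 1 \<longrightarrow> G x \<ge> 0) \<or>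
      (\<forall>x. 0 < x \<and> x < t \<longrightarrow> G x \<ge> 0) \<and> (\<forall>x. t < x \<and> x < 1 \<longrightarrow> G x \<le> 0)"
      using split[OF no1 no2] by blast
    from tt show ?thesis
    proof
      assume a: "(\<forall>x. 0 < x \<and> x < t \<longrightarrow> G x \<le> 0) \<and> (\<forall>x. t < x \<and> x < 1 \<longrightarrow> G x \<ge> 0)"
      have A: "antimono_on {0..t} f" using antimono_deriv[OF dF] a by blast
      have M: "mono_on {t..1} f" using mono_deriv[OF dF] a by blast
      have "mono_on {t..<t+1} h" using glue[OF t M A _ eq ap] f10 by blast
      then show ?thesis by blast
    next
      assume a: "(\<forall>x. 0 < x \<and> x < t \<longrightarrow> G x \<ge> 0) \<and> (\<forall>x. t < x \<and> x < 1 \<longrightarrow> G x \<le> 0)"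
      have dF': "\<And>x. ((\<lambda>x. - f x) has_real_derivative - G x) (at x)" using DERIV_minus[OF dF] .
      have A: "antimono_on {0..t} (\<lambda>x. - f x)" using antimono_deriv[OF dF'] a by auto
      have M: "mono_on {t..1} (\<lambda>x. - f x)" using mono_deriv[OF dF'] a by auto
      have eq': "\<forall>x. 0 \<le> x \<and> x < 1 \<longrightarrow> - h x = - f x" using eq by simp
      have ap': "\<forall>x. - h (x + 1) = - (- h x)" using ap by simp
      have "mono_on {t..<t+1} (\<lambda>x. - h x)" using glue[OF t M A _ eq' ap'] f10 by simp
      then have "antimono_on {t..<t+1} h" unfolding monotone_on_def by simp
      then show ?thesis by blast
    qed
  qed
  then obtain x0 where "mono_on {x0..<x0+1} h \<or> antimono_on {x0..<x0+1} h" by blast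
  then show ?thesis using mono_shift[of h x0] ap by blast
qed


end
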